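(* Let $r\ge-1$ be an integer and $m\ge1$. Let $\beta_r(m,q)=\sum q^{|\pi|}$, summed over all partitions $\pi$ with $n$ copies of $n$ having exactly $m$ parts, whose lexicographically smallest part is of the form $i_i$ for some $i\ge1$, and such that, with parts listed in ascending lexicographic order, the weighted difference of each part and the preceding one is exactly $r$. Then $$\beta_r(m,q)=\frac{q^{m^2+r\binom m2}}{(q;q^2)_m}.$$
   Context: $M=\{m_i: 1\le i\le m\}$; a partition with $n$ copies of $n$ is a finite multiset of elements of $M$, and $|\pi|$ is the sum of the values (first entries) of its parts. Lexicographic order: $m_i>n_j$ iff $m>n$, or $m=n$ and $i>j$. Weighted difference $((m_i-n_j))=m-n-i-j$; "successive weighted difference" of consecutive parts $n_j\le m_i$ in ascending order means $((m_i-n_j))$. $(a;q)_m=\prod_{j=0}^{m-1}(1-aq^j)$. *)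

theory Defs
  imports "HOL-Computational_Algebra.Formal_Power_Series" "HOL-Library.Multiset"
    "HOL-Library.Product_Lexorder"
begin

text \<open>A part m_i (with 1 <= i <= m) is represented as the pair (m, i).
  The lexicographic order of the paper is the lexicographic order on pairs
  (Product_Lexorder). A partition with n copies of n is a finite multiset of parts.\<close>

definition valid_part :: "nat \<times> nat \<Rightarrow> bool" where
  "valid_part p \<longleftrightarrow> 1 \<le> snd p \<and> snd p \<le> fst p"

definition nc_partition :: "(nat \<times> nat) multiset \<Rightarrow> bool" where
  "nc_partition \<pi> \<longleftrightarrow> (\<forall>p \<in># \<pi>. valid_part p)"

definition weight :: "(nat \<times> nat) multiset \<Rightarrow> nat" where
  "weight \<pi> = (\<Sum>p \<in># \<pi>. fst p)"

definition wdiff :: "nat \<times> nat \<Rightarrow> nat \<times> nat \<Rightarrow> int" where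
  "wdiff p p' = int (fst p) - int (fst p') - int (snd p) - int (snd p')"

definition beta_set :: "int \<Rightarrow> nat \<Rightarrow> nat \<Rightarrow> (nat \<times> nat) multiset set" where
  "beta_set r m N = {\<pi>. nc_partition \<pi> \<and> size \<pi> = m
      \<and> (\<exists>i\<ge>1. Min_mset \<pi> = (i, i))
      \<and> (let xs = sorted_list_of_multiset \<pi> in
           \<forall>k. k + 1 < length xs \<longrightarrow> wdiff (xs ! (k+1)) (xs ! k) = r)
      \<and> weight \<pi> = N}"

definition beta_fps :: "int \<Rightarrow> nat \<Rightarrow> rat fps" where
  "beta_fps r m = Abs_fps (\<lambda>N. of_nat (card (beta_set r m N)))"

end

theory Submission
  imports Defs
begin

fun dot :: "nat list \<Rightarrow> nat list \<Rightarrow> nat" where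
  "dot (w#ws) (c#cs) = w*c + dot ws cs"
| "dot _ _ = 0"

definition CSw :: "nat list \<Rightarrow> nat \<Rightarrow> nat list set" where
  "CSw ws n = {cs. length cs = length ws \<and> dot ws cs = n}"

definition G :: "nat list \<Rightarrow> rat fps" where
  "G ws = Abs_fps (\<lambda>n. of_nat (card (CSw ws n)))"

lemma dot_bound: "\<forall>w\<in>set ws. w \<ge> 1 \<Longrightarrow> length cs = length ws \<Longrightarrow> c \<in> set cs \<Longrightarrow> c \<le> dot ws cs"
proof (induction ws arbitrary: cs)
  case Nil then show ?case by simp
next
  case (Cons w ws)
  then obtain d ds where cs: "cs = d#ds" by (cases cs) auto
  have "d \<le> w*d" using Cons.prems by simp
  show ?case
  proof (cases "c = d")
    case True then show ?thesis using \<open>d \<le> w*d\<close> cs by (simp add: trans_le_add1)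
  next
    case False
    then have "c \<in> set ds" using Cons.prems cs by simp
    then have "c \<le> dot ws ds" using Cons.IH[of ds] Cons.prems cs by simp
    then show ?thesis using cs by simp
  qed
qed

lemma CSw_finite: "\<forall>w\<in>set ws. w \<ge> 1 \<Longrightarrow> finite (CSw ws n)"
proof -
  assume a: "\<forall>w\<in>set ws. w \<ge> 1"
  have "CSw ws n \<subseteq> {cs. set cs \<subseteq> {0..n} \<and> length cs = length ws}"
    using dot_bound[OF a] unfolding CSw_def by fastforce
  moreover have "finite {cs. set cs \<subseteq> {0..n} \<and> length cs = length ws}"
    by (rule finite_lists_length_eq) simp
  ultimately show ?thesis by (rule finite_subset)
qed

lemma CSw_Cons: "CSw (w#ws) n = (Cons 0) ` CSw ws n \<union>
   (if w \<le> n then (\<lambda>cs. Suc (hd cs) # tl cs) ` CSw (w#ws) (n-w) else {})"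
proof (rule set_eqI, rule iffI)
  fix cs assume "cs \<in> CSw (w#ws) n"
  then obtain c ds where cs: "cs = c#ds" and l: "length ds = length ws" and d: "w*c + dot ws ds = n"
    unfolding CSw_def by (cases cs) auto
  show "cs \<in> (Cons 0) ` CSw ws n \<union>
   (if w \<le> n then (\<lambda>cs. Suc (hd cs) # tl cs) ` CSw (w#ws) (n-w) else {})"
  proof (cases c)
    case 0 then show ?thesis using cs l d unfolding CSw_def by auto
  next
    case (Suc c')
    have "w \<le> n" using d Suc by simp
    moreover have "c'#ds \<in> CSw (w#ws) (n-w)" using d Suc l unfolding CSw_def by auto
    ultimately show ?thesis using cs Suc by (auto intro!: image_eqI[where x="c'#ds"])
  qed
next
  fix cs assume "cs \<in> (Cons 0) ` CSw ws n \<union>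
   (if w \<le> n then (\<lambda>cs. Suc (hd cs) # tl cs) ` CSw (w#ws) (n-w) else {})"
  then show "cs \<in> CSw (w#ws) n"
  proof
    assume "cs \<in> (Cons 0) ` CSw ws n" then show ?thesis unfolding CSw_def by auto
  next
    assume h: "cs \<in> (if w \<le> n then (\<lambda>cs. Suc (hd cs) # tl cs) ` CSw (w#ws) (n-w) else {})"
    then have wn: "w \<le> n" by (auto split: if_splits)
    then obtain ds where "ds \<in> CSw (w#ws) (n-w)" and cs: "cs = Suc (hd ds) # tl ds" using h by auto
    then obtain c es where ds: "ds = c#es" and l: "length es = length ws" and d: "w*c + dot ws es = n - w"
      unfolding CSw_def by (cases ds) auto
    show ?thesis using cs ds l d wn unfolding CSw_def by auto
  qed
qed

lemma card_CSw_Cons: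
  assumes "\<forall>x\<in>set (w#ws). x \<ge> 1"
  shows "card (CSw (w#ws) n) = card (CSw ws n) + (if w \<le> n then card (CSw (w#ws) (n-w)) else 0)"
proof -
  have f1: "finite (CSw ws n)" using assms CSw_finite by simp
  have f2: "finite (CSw (w#ws) (n-w))" using assms CSw_finite by blast
  have i2: "inj_on (\<lambda>cs. Suc (hd cs) # tl cs) (CSw (w#ws) (n-w))"
  proof (rule inj_onI)
    fix x y assume "x \<in> CSw (w#ws) (n-w)" "y \<in> CSw (w#ws) (n-w)" and e: "Suc (hd x) # tl x = Suc (hd y) # tl y"
    then have "x \<noteq> []" "y \<noteq> []" unfolding CSw_def by auto
    then show "x = y" using e by (metis list.collapse list.inject nat.inject)
  qed
  have disj: "(Cons 0) ` CSw ws n \<inter> (\<lambda>cs. Suc (hd cs) # tl cs) ` CSw (w#ws) (n-w) = {}" by auto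
  show ?thesis
  proof (cases "w \<le> n")
    case True
    then show ?thesis unfolding CSw_Cons[of w ws n]
      using card_Un_disjoint[OF finite_imageI[OF f1] finite_imageI[OF f2] disj]
        card_image[OF i2] card_image[of "Cons 0" "CSw ws n"] by simp
  next
    case False
    then show ?thesis unfolding CSw_Cons[of w ws n] using card_image[of "Cons 0" "CSw ws n"] by simp
  qed
qed

lemma G_Cons: "\<forall>x\<in>set (w#ws). x \<ge> 1 \<Longrightarrow> G (w#ws) * (1 - fps_X^w) = G ws"
proof (rule fps_ext)
  fix n assume a: "\<forall>x\<in>set (w#ws). x \<ge> 1"
  have "fps_nth (G (w#ws) * (1 - fps_X^w)) n = fps_nth (G (w#ws)) n - fps_nth (fps_X^w * G (w#ws)) n"
    by (simp add: algebra_simps)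
  also have "\<dots> = fps_nth (G ws) n"
    unfolding fps_X_power_mult_nth G_def using card_CSw_Cons[OF a, of n] by auto
  finally show "fps_nth (G (w#ws) * (1 - fps_X^w)) n = fps_nth (G ws) n" .
qed

lemma G_Nil: "G [] = 1"
proof (rule fps_ext)
  fix n
  have "CSw [] n = (if n = 0 then {[]} else {})" unfolding CSw_def by auto
  then show "fps_nth (G []) n = fps_nth 1 n" unfolding G_def by simp
qed

lemma G_prod: "\<forall>x\<in>set ws. x \<ge> 1 \<Longrightarrow> G ws * prod_list (map (\<lambda>w. 1 - fps_X^w) ws) = 1"
proof (induction ws)
  case Nil then show ?case by (simp add: G_Nil)
next
  case (Cons w ws)
  have "G (w#ws) * prod_list (map (\<lambda>w. 1 - fps_X^w) (w#ws))
     = (G (w#ws) * (1 - fps_X^w)) * prod_list (map (\<lambda>w. 1 - fps_X^w) ws)" by (simp add: mult.assoc)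
  also have "\<dots> = 1" using Cons G_Cons by simp
  finally show ?case .
qed


fun mk :: "int \<Rightarrow> nat \<Rightarrow> nat \<Rightarrow> nat list \<Rightarrow> (nat \<times> nat) list" where
  "mk r n i [] = []"
| "mk r n i (j#js) = (nat (int n + int i + int j + r), j) # mk r (nat (int n + int i + int j + r)) j js"

fun build :: "int \<Rightarrow> nat list \<Rightarrow> (nat \<times> nat) list" where
  "build r [] = []"
| "build r (a#js) = (a,a) # mk r a a js"

fun ow :: "nat \<Rightarrow> nat list" where
  "ow 0 = []"
| "ow (Suc L) = (2*L+1) # ow L"

lemma length_ow[simp]: "length (ow m) = m"
  by (induction m) auto

lemma ow_pos: "\<forall>x\<in>set (ow m). x \<ge> 1"
  by (induction m) auto

lemma mk_snd[simp]: "map snd (mk r n i js) = js"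
  by (induction js arbitrary: n i) auto

lemma build_snd[simp]: "map snd (build r ys) = ys"
  by (cases ys) auto

lemma mk_props:
  assumes "r \<ge> -1" "n \<ge> 1" "i \<ge> 1" "\<forall>j\<in>set js. j \<ge> 1"
  shows "(\<forall>p\<in>set (mk r n i js). valid_part p \<and> n < fst p) \<and>
         sorted_wrt (\<lambda>p q. fst p < fst q) (mk r n i js) \<and>
         successively (\<lambda>p q. wdiff q p = r) ((n,i) # mk r n i js)"
  using assms(2-4)
proof (induction js arbitrary: n i)
  case Nil then show ?case by simp
next
  case (Cons j js)
  define n' where "n' = nat (int n + int i + int j + r)"
  have jn: "j \<ge> 1" using Cons.prems by simp
  have n'i: "int n' = int n + int i + int j + r" unfolding n'_def using assms(1) Cons.prems by simp
  have nn': "n < n'" using n'i assms(1) Cons.prems by simp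
  have IH: "(\<forall>p\<in>set (mk r n' j js). valid_part p \<and> n' < fst p) \<and>
         sorted_wrt (\<lambda>p q. fst p < fst q) (mk r n' j js) \<and>
         successively (\<lambda>p q. wdiff q p = r) ((n',j) # mk r n' j js)"
    using Cons.IH[of n' j] Cons.prems nn' by simp
  have v: "valid_part (n', j)" unfolding valid_part_def using jn n'i assms(1) Cons.prems by simp
  have w: "wdiff (n',j) (n,i) = r" unfolding wdiff_def using n'i by simp
  have eq: "mk r n i (j#js) = (n',j) # mk r n' j js" by (simp add: n'_def)
  show ?case unfolding eq using IH v w nn' by auto
qed

lemma mk_weight:
  assumes "r \<ge> -1" "\<forall>j\<in>set js. j \<ge> 1"
  shows "2 * int (sum_list (map fst (mk r n i js))) =
     2 * int (length js) * (int n + int i) + 2 * int (dot (ow (length js)) js)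
       + r * int (length js) * (int (length js) + 1)"
  using assms(2)
proof (induction js arbitrary: n i)
  case Nil then show ?case by simp
next
  case (Cons j js)
  define n' where "n' = nat (int n + int i + int j + r)"
  have n'i: "int n' = int n + int i + int j + r" unfolding n'_def using assms(1) Cons.prems by simp
  have IH: "2 * int (sum_list (map fst (mk r n' j js))) =
     2 * int (length js) * (int n' + int j) + 2 * int (dot (ow (length js)) js)
       + r * int (length js) * (int (length js) + 1)" using Cons by simp
  have "2 * int (sum_list (map fst (mk r n i (j#js)))) = 2 * int n' + 2 * int (sum_list (map fst (mk r n' j js)))"
    unfolding n'_def by simp
  also have "\<dots> = 2 * int (length (j#js)) * (int n + int i) + 2 * int (dot (ow (length (j#js))) (j#js))
       + r * int (length (j#js)) * (int (length (j#js)) + 1)"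
    unfolding IH n'i by (simp add: algebra_simps)
  finally show ?case .
qed

lemma succ_nth: "(\<forall>k. k+1 < length xs \<longrightarrow> P (xs!(k+1)) (xs!k)) \<longleftrightarrow> successively (\<lambda>a b. P b a) xs"
proof (induction xs rule: induct_list012)
  case (3 x y zs)
  have "(\<forall>k. k+1 < length (x#y#zs) \<longrightarrow> P ((x#y#zs)!(k+1)) ((x#y#zs)!k)) \<longleftrightarrow>
     P y x \<and> (\<forall>k. k+1 < length (y#zs) \<longrightarrow> P ((y#zs)!(k+1)) ((y#zs)!k))"
  proof
    assume h: "\<forall>k. k+1 < length (x#y#zs) \<longrightarrow> P ((x#y#zs)!(k+1)) ((x#y#zs)!k)"
    show "P y x \<and> (\<forall>k. k+1 < length (y#zs) \<longrightarrow> P ((y#zs)!(k+1)) ((y#zs)!k))"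
    proof
      show "P y x" using h[rule_format, of 0] by simp
      show "\<forall>k. k+1 < length (y#zs) \<longrightarrow> P ((y#zs)!(k+1)) ((y#zs)!k)"
      proof (intro allI impI)
        fix k assume "k+1 < length (y#zs)"
        then show "P ((y#zs)!(k+1)) ((y#zs)!k)" using h[rule_format, of "Suc k"] by simp
      qed
    qed
  next
    assume h: "P y x \<and> (\<forall>k. k+1 < length (y#zs) \<longrightarrow> P ((y#zs)!(k+1)) ((y#zs)!k))"
    show "\<forall>k. k+1 < length (x#y#zs) \<longrightarrow> P ((x#y#zs)!(k+1)) ((x#y#zs)!k)"
    proof (intro allI impI)
      fix k assume k: "k+1 < length (x#y#zs)"
      show "P ((x#y#zs)!(k+1)) ((x#y#zs)!k)"
      proof (cases k)
        case 0 then show ?thesis using h by simp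
      next
        case (Suc k') then show ?thesis using h k by simp
      qed
    qed
  qed
  then show ?case using 3 by simp
qed auto

lemma sorted_Min_hd: "sorted xs \<Longrightarrow> xs \<noteq> [] \<Longrightarrow> Min (set xs) = hd xs"
  by (cases xs) (auto intro!: Min_eqI)

lemma recover_mk:
  "successively (\<lambda>p q. wdiff q p = r) ((n,i) # rest) \<Longrightarrow> rest = mk r n i (map snd rest)"
proof (induction rest arbitrary: n i)
  case Nil then show ?case by simp
next
  case (Cons p rest)
  obtain n' j where p: "p = (n', j)" by (cases p)
  have w: "wdiff (n',j) (n,i) = r" and s: "successively (\<lambda>p q. wdiff q p = r) ((n',j) # rest)"
    using Cons.prems p by auto
  have "n' = nat (int n + int i + int j + r)" using w unfolding wdiff_def by simp
  then show ?case using Cons.IH[OF s] p by simp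
qed

lemma dot_Suc: "length cs = m \<Longrightarrow> dot (ow m) (map Suc cs) = dot (ow m) cs + m^2"
proof (induction m arbitrary: cs)
  case 0 then show ?case by simp
next
  case (Suc L)
  then obtain c cs' where cs: "cs = c#cs'" "length cs' = L" by (cases cs) auto
  show ?case using Suc.IH[OF cs(2)] cs by (simp add: algebra_simps power2_eq_square)
qed


lemma build_facts:
  assumes "r \<ge> -1" "a \<ge> 1" "\<forall>j\<in>set js. j \<ge> 1"
  shows "sorted_wrt (<) (build r (a#js)) \<and> (\<forall>p\<in>set (build r (a#js)). valid_part p)
     \<and> successively (\<lambda>p q. wdiff q p = r) (build r (a#js))"
proof -
  have M: "(\<forall>p\<in>set (mk r a a js). valid_part p \<and> a < fst p) \<and>
         sorted_wrt (\<lambda>p q. fst p < fst q) (mk r a a js) \<and>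
         successively (\<lambda>p q. wdiff q p = r) ((a,a) # mk r a a js)"
    using mk_props[OF assms(1,2,2,3)] .
  have s1: "sorted_wrt (<) (mk r a a js)"
    using M sorted_wrt_mono_rel[of "mk r a a js" "\<lambda>p q. fst p < fst q" "(<)"]
    by (auto simp: prod_less_def)
  have v: "valid_part (a,a)" unfolding valid_part_def using assms by simp
  have lt: "\<forall>p\<in>set (mk r a a js). (a,a) < p" using M by (auto simp: prod_less_def)
  show ?thesis using M s1 v lt by simp
qed

lemma weight_mset: "weight (mset xs) = sum_list (map fst xs)"
  unfolding weight_def by (simp add: sum_mset_sum_list flip: mset_map)

lemma build_weight:
  assumes "r \<ge> -1" "\<forall>j\<in>set js. j \<ge> 1"
  shows "2 * int (sum_list (map fst (build r (a#js)))) =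
     2 * int (dot (ow (Suc (length js))) (a#js)) + r * int (Suc (length js)) * int (length js)"
  using mk_weight[OF assms, of a a] by (simp add: algebra_simps)

lemma choose2_int: "2 * int (m choose 2) = int m * (int m - 1)"
proof (cases m)
  case 0 then show ?thesis by simp
next
  case (Suc k)
  have "Suc k choose 2 = Suc k * k div 2" using choose_two[of "Suc k"] by simp
  moreover have "even (Suc k * k)" by simp
  ultimately have "2 * (Suc k choose 2) = Suc k * k" by simp
  then have "2 * int (Suc k choose 2) = int (Suc k * k)" by (metis of_nat_mult of_nat_numeral)
  then show ?thesis using Suc by (simp add: algebra_simps)
qed


lemma beta_card:
  assumes r: "r \<ge> -1" and m: "m \<ge> 1" and e_def: "int e = int (m^2) + r * int (m choose 2)"
  shows "card (beta_set r m N) = card {cs. length cs = m \<and> e + dot (ow m) cs = N}"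
proof -
  define f where "f cs = mset (build r (map Suc cs))" for cs
  define A where "A = {cs. length cs = m \<and> e + dot (ow m) cs = N}"
  have key: "sorted_list_of_multiset (f cs) = build r (map Suc cs) \<and> nc_partition (f cs)
      \<and> size (f cs) = m \<and> Min_mset (f cs) = (Suc (hd cs), Suc (hd cs))
      \<and> successively (\<lambda>p q. wdiff q p = r) (build r (map Suc cs))
      \<and> weight (f cs) = e + dot (ow m) cs" if len: "length cs = m" for cs
  proof -
    obtain c cs' where cs: "cs = c#cs'" using len m by (cases cs) auto
    have F: "sorted_wrt (<) (build r (Suc c # map Suc cs')) \<and> (\<forall>p\<in>set (build r (Suc c # map Suc cs')). valid_part p)
     \<and> successively (\<lambda>p q. wdiff q p = r) (build r (Suc c # map Suc cs'))"
      using build_facts[OF r, of "Suc c" "map Suc cs'"] by simp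
    have sw: "sorted_wrt (<) (build r (Suc c # map Suc cs'))" using F by blast
    have so: "sorted (build r (Suc c # map Suc cs'))"
      by (rule sorted_wrt_mono_rel[OF _ sw]) (rule less_imp_le)
    have len2: "length (build r (map Suc cs)) = m"
      using build_snd[of r "map Suc cs"] len by (metis length_map)
    have hd: "hd (build r (Suc c # map Suc cs')) = (Suc c, Suc c)" by simp
    have W: "2 * int (sum_list (map fst (build r (Suc c # map Suc cs')))) =
     2 * int (dot (ow (Suc (length cs'))) (Suc c # map Suc cs')) + r * int (Suc (length cs')) * int (length cs')"
      using build_weight[OF r, of "map Suc cs'" "Suc c"] by simp
    have Ml: "Suc (length cs') = m" using cs len by simp
    have Lc: "int (length cs') = int m - 1" using Ml by auto
    have D: "dot (ow m) (map Suc cs) = dot (ow m) cs + m^2" using dot_Suc[OF len] .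
    have C: "2 * int (m choose 2) = int m * (int m - 1)" by (rule choose2_int)
    have "2 * int (weight (f cs)) = 2 * int (dot (ow m) (map Suc cs)) + r * (int m * (int m - 1))"
      unfolding f_def weight_mset cs using W Ml Lc by (simp add: algebra_simps)
    also have "\<dots> = 2 * int (dot (ow m) cs) + 2 * int (m^2) + r * (2 * int (m choose 2))"
      using D C by simp
    also have "\<dots> = 2 * int (e + dot (ow m) cs)" using e_def by (simp add: algebra_simps)
    finally have "2 * int (weight (f cs)) = 2 * int (e + dot (ow m) cs)" .
    then have wt: "weight (f cs) = e + dot (ow m) cs" by simp
    have st: "sorted_list_of_multiset (f cs) = build r (map Suc cs)"
      unfolding f_def cs using sorted_sort_id[OF so] by (simp only: sorted_list_of_multiset_mset list.map)
    have "nc_partition (f cs)" using F cs unfolding f_def nc_partition_def by (simp only: list.map set_mset_mset) blast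
    moreover have "size (f cs) = m" using len2 unfolding f_def by simp
    moreover have "Min_mset (f cs) = (Suc (hd cs), Suc (hd cs))"
      using sorted_Min_hd[OF so] cs unfolding f_def by (simp only: set_mset_mset list.map list.sel hd) simp
    moreover have "successively (\<lambda>p q. wdiff q p = r) (build r (map Suc cs))" using F cs by (simp only: list.map)
    ultimately show ?thesis using st wt by blast
  qed
  have inj: "inj_on f A"
  proof (rule inj_onI)
    fix x y assume x: "x \<in> A" and y: "y \<in> A" and e: "f x = f y"
    have "build r (map Suc x) = build r (map Suc y)" using key[of x] key[of y] x y e A_def by auto
    then have "map snd (build r (map Suc x)) = map snd (build r (map Suc y))" by simp
    then show "x = y" by simp
  qed
  have img: "f ` A = beta_set r m N"
  proof
    show "f ` A \<subseteq> beta_set r m N"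
    proof
      fix \<pi> assume "\<pi> \<in> f ` A"
      then obtain cs where cs: "cs \<in> A" "\<pi> = f cs" by auto
      have K: "sorted_list_of_multiset (f cs) = build r (map Suc cs) \<and> nc_partition (f cs)
      \<and> size (f cs) = m \<and> Min_mset (f cs) = (Suc (hd cs), Suc (hd cs))
      \<and> successively (\<lambda>p q. wdiff q p = r) (build r (map Suc cs))
      \<and> weight (f cs) = e + dot (ow m) cs" using key cs A_def by simp
      then show "\<pi> \<in> beta_set r m N" unfolding beta_set_def Let_def
        using cs A_def succ_nth[of "build r (map Suc cs)" "\<lambda>a b. wdiff a b = r"]
        by auto
    qed
  next
    show "beta_set r m N \<subseteq> f ` A"
    proof
      fix \<pi> assume p: "\<pi> \<in> beta_set r m N"
      define xs where "xs = sorted_list_of_multiset \<pi>"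
      have pm: "nc_partition \<pi>" "size \<pi> = m" "weight \<pi> = N"
        and mi: "\<exists>i\<ge>1. Min_mset \<pi> = (i, i)"
        and sc: "\<forall>k. k + 1 < length xs \<longrightarrow> wdiff (xs ! (k+1)) (xs ! k) = r"
        using p unfolding beta_set_def xs_def Let_def by auto
      obtain i where i: "i \<ge> 1" "Min_mset \<pi> = (i,i)" using mi by auto
      have lx: "length xs = m" using pm(2) unfolding xs_def
        by (metis mset_sorted_list_of_multiset size_mset)
      have sx: "set xs = set_mset \<pi>" unfolding xs_def by simp
      have ne: "xs \<noteq> []" using lx m by auto
      have hx: "hd xs = (i,i)" using sorted_Min_hd[of xs] ne i sx unfolding xs_def by simp
      then obtain rest where xr: "xs = (i,i) # rest" using ne by (cases xs) auto
      have su: "successively (\<lambda>p q. wdiff q p = r) xs"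
        using sc succ_nth[of xs "\<lambda>a b. wdiff a b = r"] by simp
      have rest: "rest = mk r i i (map snd rest)" using recover_mk su xr by simp
      have xb: "xs = build r (map snd xs)" using xr rest by simp
      have pos: "\<forall>y\<in>set (map snd xs). y \<ge> 1"
        using pm(1) sx unfolding nc_partition_def valid_part_def by auto
      define cs where "cs = map (\<lambda>y. y - 1) (map snd xs)"
      have ms: "map Suc cs = map snd xs" unfolding cs_def using pos
        by (induction xs) auto
      have lc: "length cs = m" unfolding cs_def using lx by simp
      have pf: "\<pi> = f cs" unfolding f_def ms using xb xs_def
        by (metis mset_sorted_list_of_multiset)
      have "weight (f cs) = e + dot (ow m) cs" using key[OF lc] by simp
      then have "cs \<in> A" using pm(3) pf lc unfolding A_def by simp
      then show "\<pi> \<in> f ` A" using pf by blast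
    qed
  qed
  show ?thesis using card_image[OF inj] img A_def by simp
qed


lemma prod_ow: "(\<Prod>j<m. 1 - fps_X * (fps_X ^ 2) ^ j) = prod_list (map (\<lambda>w. 1 - fps_X^w) (ow m) :: rat fps list)"
proof (induction m)
  case 0 then show ?case by simp
next
  case (Suc L)
  have "fps_X * (fps_X ^ 2) ^ L = (fps_X ^ (2*L+1) :: rat fps)"
    by (simp add: power_mult[symmetric] power_add mult.commute)
  then show ?case using Suc by (simp add: mult.commute)
qed

theorem theorem20:
  fixes r :: int and m :: nat
  assumes "r \<ge> -1" and "m \<ge> 1"
  shows "beta_fps r m =
    fps_X ^ nat (int (m^2) + r * int (m choose 2)) /
      (\<Prod>j<m. 1 - fps_X * (fps_X ^ 2) ^ j)"
proof -
  define e where "e = nat (int (m^2) + r * int (m choose 2))"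
  have Cle: "m choose 2 \<le> m^2"
  proof (cases "2 \<le> m")
    case True then show ?thesis by (rule binomial_le_pow)
  next
    case False then have "m choose 2 = 0" by (intro binomial_eq_0) simp
    then show ?thesis by (metis le0)
  qed
  have "-1 * int (m choose 2) \<le> r * int (m choose 2)"
    by (rule mult_right_mono[OF assms(1)]) simp
  then have nn: "int (m^2) + r * int (m choose 2) \<ge> 0" using Cle by linarith
  then have ei: "int e = int (m^2) + r * int (m choose 2)" unfolding e_def by simp
  define P where "P = prod_list (map (\<lambda>w. 1 - fps_X^w) (ow m) :: rat fps list)"
  have GP: "G (ow m) * P = 1" unfolding P_def using G_prod ow_pos by blast
  have B: "beta_fps r m = fps_X ^ e * G (ow m)"
  proof (rule fps_ext)
    fix N
    have A: "{cs. length cs = m \<and> e + dot (ow m) cs = N} = (if e \<le> N then CSw (ow m) (N - e) else {})"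
      unfolding CSw_def by auto
    show "fps_nth (beta_fps r m) N = fps_nth (fps_X ^ e * G (ow m)) N"
      unfolding fps_X_power_mult_nth beta_fps_def G_def
      using beta_card[OF assms ei, of N] A by simp
  qed
  have BP: "beta_fps r m * P = fps_X ^ e" unfolding B using GP by (simp add: mult.assoc)
  have Pnz: "P \<noteq> 0" using GP by auto
  have "fps_X ^ e / P = beta_fps r m"
    unfolding BP[symmetric] using Pnz by (rule nonzero_mult_div_cancel_right)
  then show ?thesis unfolding prod_ow P_def[symmetric] e_def[symmetric] by (rule sym)
qed

end
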